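(* Let $\ell,m$ be positive integers and let $S(\ell,m)$ be the $(\ell+m)\times(\ell+m)$ coloring matrix whose first $\ell$ rows consist entirely of ones and whose remaining $m$ rows consist entirely of zeroes. Then for all $n>1$, $$t_{S(\ell,m)}(n)=\sum_{k=1}^{n-1}N_{n-1,k}\,\ell^{n-k}(\ell+m)^k=\sum_{k=1}^{n-1}\frac{1}{n-1}\binom{n-1}{k}\binom{n-1}{k-1}\ell^{n-k}(\ell+m)^k.$$
   Context: A plane tree is an unlabeled rooted tree in which the children of every vertex are linearly ordered. A coloring matrix is a square matrix $A=(a_{ij})$ with entries in $\{0,1\}$. An $A$-coloring of a plane tree assigns to each vertex a color (an index of a row of $A$) such that whenever a vertex of color $j$ is a child of a vertex of color $i$, $a_{ij}=1$. Let $t_A(n)$ be the number of pairs (plane tree with $n$ vertices, $A$-coloring of it). $N_{n,k}=\frac1n\binom{n}{k}\binom{n}{k-1}$ denotes the Narayana numbers. *)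

theory Defs
  imports Complex_Main
begin

text \<open>Plane trees whose vertices carry a label (here: a colour).  A pair
(plane tree, colouring of its vertices) is exactly such a labelled plane tree:
the children of each vertex are linearly ordered by the list.\<close>
datatype 'a ltree = LNode 'a "'a ltree list"

fun lroot :: "'a ltree \<Rightarrow> 'a" where
  "lroot (LNode a ts) = a"

fun nverts :: "'a ltree \<Rightarrow> nat" where
  "nverts (LNode a ts) = Suc (sum_list (map nverts ts))"

text \<open>A coloring matrix of size d is given by its entries a i j (i, j < d),
with True meaning 1 and False meaning 0.  Colours are 0, ..., d-1.\<close>
fun is_A_coloring :: "(nat \<Rightarrow> nat \<Rightarrow> bool) \<Rightarrow> nat \<Rightarrow> nat ltree \<Rightarrow> bool" where
  "is_A_coloring a d (LNode c ts) =
     (c < d \<and> (\<forall>t\<in>set ts. a c (lroot t) \<and> is_A_coloring a d t))"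

definition tA :: "(nat \<Rightarrow> nat \<Rightarrow> bool) \<Rightarrow> nat \<Rightarrow> nat \<Rightarrow> nat" where
  "tA a d n = card {T. nverts T = n \<and> is_A_coloring a d T}"

definition S_matrix :: "nat \<Rightarrow> nat \<Rightarrow> nat \<Rightarrow> bool" where
  "S_matrix l i j = (i < l)"

definition narayana :: "nat \<Rightarrow> nat \<Rightarrow> real" where
  "narayana n k = (1 / real n) * real (n choose k) * real (n choose (k - 1))"

end

theory Submission imports Defs begin

fun Dd :: "nat \<Rightarrow> nat \<Rightarrow> nat \<Rightarrow> real" where
  "Dd a b 0 = 0"
| "Dd a b (Suc j) = real (a choose Suc j) * real (b choose j) - real (a choose j) * real (b choose Suc j)"

definition G :: "real \<Rightarrow> real \<Rightarrow> nat \<Rightarrow> nat \<Rightarrow> real" where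
  "G x y n r = (if n < r then 0 else if r = n then y ^ n
     else (\<Sum>i\<le>n. Dd (n-1) (n-r-1) i * x^i * y^(n-i)))"

lemma Dd_rec: "Dd (Suc a) (Suc b) i = Dd (Suc a) b i + Dd a (Suc b) i + Dd a b (i - 1) - Dd a b i"
proof (cases i)
  case 0 then show ?thesis by simp
next
  case (Suc j)
  then show ?thesis
  proof (cases j)
    case 0 then show ?thesis using Suc by simp
  next
    case (Suc k)
    then show ?thesis using \<open>i = Suc j\<close> by (simp add: algebra_simps)
  qed
qed

lemma Dd_high: "Suc (Suc a) \<le> i \<Longrightarrow> Dd a b i = 0"
  by (cases i) (auto simp: binomial_eq_0)

lemma Dd_same: "Dd a a i = 0"
  by (cases i) auto

lemma Dd_b0: "Dd a 0 i = (if i = 1 then real a else 0)"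
  by (cases i) auto

lemma sum_Dd_b0:
  assumes "N \<ge> 1"
  shows "(\<Sum>i\<le>N. Dd a 0 i * x^i * y^(N-i)) = real a * x * y^(N-1)"
proof -
  have "(\<Sum>i\<le>N. Dd a 0 i * x^i * y^(N-i)) = (\<Sum>i\<le>N. if i = 1 then real a * x * y^(N-1) else 0)"
    by (rule sum.cong) (auto simp: Dd_b0)
  also have "\<dots> = real a * x * y^(N-1)" using assms by (simp add: sum.delta')
  finally show ?thesis .
qed

lemma sum_rec:
  assumes "Suc a \<le> n"
  shows "(\<Sum>i\<le>Suc n. Dd (Suc a) (Suc b) i * x^i * y^(Suc n - i)) =
     (\<Sum>i\<le>Suc n. Dd (Suc a) b i * x^i * y^(Suc n - i))
     + y * (\<Sum>i\<le>n. Dd a (Suc b) i * x^i * y^(n-i))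
     + (x - y) * (\<Sum>i\<le>n. Dd a b i * x^i * y^(n-i))"
proof -
  have yshift: "y * (\<Sum>i\<le>n. Dd a c i * x^i * y^(n-i)) = (\<Sum>i\<le>Suc n. Dd a c i * x^i * y^(Suc n-i))" for c
  proof -
    have "y * (\<Sum>i\<le>n. Dd a c i * x^i * y^(n-i)) = (\<Sum>i\<le>n. Dd a c i * x^i * y^(Suc n-i))"
      by (simp add: sum_distrib_left Suc_diff_le algebra_simps)
    also have "\<dots> = (\<Sum>i\<le>Suc n. Dd a c i * x^i * y^(Suc n-i))"
      using Dd_high[of a "Suc n" c] assms by simp
    finally show ?thesis .
  qed
  have xshift: "x * (\<Sum>i\<le>n. Dd a b i * x^i * y^(n-i)) = (\<Sum>i\<le>Suc n. Dd a b (i-1) * x^i * y^(Suc n-i))"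
  proof -
    have "(\<Sum>i\<le>Suc n. Dd a b (i-1) * x^i * y^(Suc n-i)) = (\<Sum>i<Suc n. Dd a b i * x^Suc i * y^(n-i))"
      by (subst sum.atMost_shift) simp
    also have "\<dots> = x * (\<Sum>i\<le>n. Dd a b i * x^i * y^(n-i))"
      by (simp add: sum_distrib_left lessThan_Suc_atMost algebra_simps)
    finally show ?thesis by simp
  qed
  have "(\<Sum>i\<le>Suc n. Dd (Suc a) (Suc b) i * x^i * y^(Suc n - i)) =
     (\<Sum>i\<le>Suc n. Dd (Suc a) b i * x^i * y^(Suc n - i) + Dd a (Suc b) i * x^i * y^(Suc n - i)
        + Dd a b (i - 1) * x^i * y^(Suc n - i) - Dd a b i * x^i * y^(Suc n - i))"
    by (rule sum.cong) (auto simp: Dd_rec[of a b] algebra_simps)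
  also have "\<dots> = (\<Sum>i\<le>Suc n. Dd (Suc a) b i * x^i * y^(Suc n - i))
     + (\<Sum>i\<le>Suc n. Dd a (Suc b) i * x^i * y^(Suc n - i))
     + (\<Sum>i\<le>Suc n. Dd a b (i - 1) * x^i * y^(Suc n - i))
     - (\<Sum>i\<le>Suc n. Dd a b i * x^i * y^(Suc n - i))"
    by (simp add: sum.distrib sum_subtractf)
  also have "\<dots> = (\<Sum>i\<le>Suc n. Dd (Suc a) b i * x^i * y^(Suc n - i))
     + y * (\<Sum>i\<le>n. Dd a (Suc b) i * x^i * y^(n-i))
     + x * (\<Sum>i\<le>n. Dd a b i * x^i * y^(n-i))
     - y * (\<Sum>i\<le>n. Dd a b i * x^i * y^(n-i))"
    by (simp only: yshift xshift)
  finally show ?thesis by (simp add: algebra_simps)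
qed

lemma G_rec: "G x y (Suc n) (Suc r) = G x y (Suc n) (Suc (Suc r)) + y * G x y n r + (x - y) * G x y n (Suc r)"
proof -
  consider "n < r" | "r = n" | "Suc r = n" | "Suc r < n" by linarith
  then show ?thesis
  proof cases
    case 1 then show ?thesis by (simp add: G_def)
  next
    case 2 then show ?thesis by (simp add: G_def)
  next
    case 3
    have a: "G x y (Suc n) (Suc r) = real n * x * y ^ n"
      using 3 sum_Dd_b0[of "Suc n" n x y] by (auto simp: G_def)
    have b: "G x y n r = real (n-1) * x * y ^ (n-1)"
      using 3 sum_Dd_b0[of n "n-1" x y] by (auto simp: G_def)
    show ?thesis using 3 a b by (auto simp: G_def algebra_simps)
  next
    case 4
    then obtain b where nb: "n = Suc (Suc (r + b))" by (metis less_iff_Suc_add add_Suc_right add_Suc)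
    define a where "a = Suc (r + b)"
    have n: "n = Suc a" using nb a_def by simp
    have e1: "G x y (Suc n) (Suc r) = (\<Sum>i\<le>Suc n. Dd (Suc a) (Suc b) i * x^i * y^(Suc n - i))"
      using nb n by (simp add: G_def)
    have e2: "G x y (Suc n) (Suc (Suc r)) = (\<Sum>i\<le>Suc n. Dd (Suc a) b i * x^i * y^(Suc n - i))"
      using nb n by (simp add: G_def)
    have e3: "G x y n r = (\<Sum>i\<le>n. Dd a (Suc b) i * x^i * y^(n-i))"
      using nb n by (simp add: G_def)
    have e4: "G x y n (Suc r) = (\<Sum>i\<le>n. Dd a b i * x^i * y^(n-i))"
      using nb n by (simp add: G_def)
    show ?thesis unfolding e1 e2 e3 e4 by (rule sum_rec) (simp add: n)
  qed
qed


definition colset :: "nat \<Rightarrow> nat \<Rightarrow> nat \<Rightarrow> nat set" where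
  "colset l m d = (if d = 0 then {..<l+m} else {..<l})"

definition FS :: "nat \<Rightarrow> nat \<Rightarrow> nat \<Rightarrow> nat \<Rightarrow> nat ltree list set" where
  "FS l m n r = {ts. length ts = r \<and> sum_list (map nverts ts) = n \<and>
      (\<forall>t\<in>set ts. is_A_coloring (S_matrix l) (l+m) t)}"

lemma nverts_pos: "nverts t \<ge> 1"
  by (cases t) auto

lemma length_le: "length ts \<le> sum_list (map nverts ts)"
proof (induction ts)
  case Nil then show ?case by simp
next
  case (Cons a ts)
  have "1 \<le> nverts a" by (rule nverts_pos)
  then show ?case using Cons by simp
qed

lemma valid_node: "is_A_coloring (S_matrix l) (l+m) (LNode c ts) \<longleftrightarrow>
   c \<in> colset l m (length ts) \<and> (\<forall>t\<in>set ts. is_A_coloring (S_matrix l) (l+m) t)"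
  by (cases ts) (auto simp: colset_def S_matrix_def)

lemma FS_empty: "n < r \<Longrightarrow> FS l m n r = {}"
proof -
  assume "n < r"
  { fix ts assume "ts \<in> FS l m n r"
    then have "length ts = r" "sum_list (map nverts ts) = n" unfolding FS_def by auto
    with length_le[of ts] \<open>n < r\<close> have False by simp }
  then show ?thesis by blast
qed

lemma FS_0: "FS l m 0 r = (if r = 0 then {[]} else {})"
proof (cases r)
  case 0 then show ?thesis unfolding FS_def by auto
next
  case (Suc r') then show ?thesis using FS_empty[of 0 r l m] by simp
qed

lemma FS_Suc0: "FS l m (Suc n) 0 = {}"
  unfolding FS_def by auto

definition cons_map :: "nat \<Rightarrow> nat \<times> nat ltree list \<Rightarrow> nat ltree list" where
  "cons_map d p = LNode (fst p) (take d (snd p)) # drop d (snd p)"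

lemma FS_Suc: "FS l m (Suc n) (Suc r) =
   (\<Union>d\<in>{..n}. cons_map d ` (colset l m d \<times> FS l m n (r+d)))"
proof
  show "FS l m (Suc n) (Suc r) \<subseteq> (\<Union>d\<in>{..n}. cons_map d ` (colset l m d \<times> FS l m n (r+d)))"
  proof
    fix ts assume ts: "ts \<in> FS l m (Suc n) (Suc r)"
    then obtain t rest where tr: "ts = t # rest" unfolding FS_def by (cases ts) auto
    obtain c cs where t: "t = LNode c cs" by (cases t)
    define d where "d = length cs"
    have sums: "Suc (sum_list (map nverts cs)) + sum_list (map nverts rest) = Suc n"
      using ts tr t unfolding FS_def by simp
    have dn: "d \<in> {..n}" using length_le[of cs] sums d_def by simp
    have vt: "is_A_coloring (S_matrix l) (l+m) t" using ts tr unfolding FS_def by simp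
    have "c \<in> colset l m (length cs) \<and> (\<forall>t\<in>set cs. is_A_coloring (S_matrix l) (l+m) t)"
      using vt[unfolded t valid_node] .
    then have cc: "c \<in> colset l m d" and vcs: "\<forall>t\<in>set cs. is_A_coloring (S_matrix l) (l+m) t"
      using d_def by auto
    have mem: "(c, cs @ rest) \<in> colset l m d \<times> FS l m n (r+d)"
      using ts tr t sums d_def cc vcs unfolding FS_def by auto
    have eq: "ts = cons_map d (c, cs @ rest)"
      using tr t d_def by (simp add: cons_map_def)
    have "ts \<in> cons_map d ` (colset l m d \<times> FS l m n (r+d))"
      using eq mem by (rule image_eqI)
    then show "ts \<in> (\<Union>d\<in>{..n}. cons_map d ` (colset l m d \<times> FS l m n (r+d)))"
      using dn by (rule UN_I[rotated])
  qed
next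
  show "(\<Union>d\<in>{..n}. cons_map d ` (colset l m d \<times> FS l m n (r+d))) \<subseteq> FS l m (Suc n) (Suc r)"
  proof
    fix ts assume "ts \<in> (\<Union>d\<in>{..n}. cons_map d ` (colset l m d \<times> FS l m n (r+d)))"
    then obtain d p where d: "d \<in> {..n}" and p: "p \<in> colset l m d \<times> FS l m n (r+d)"
      and tsp: "ts = cons_map d p" by blast
    obtain c F where cF: "p = (c, F)" by (cases p)
    have c: "c \<in> colset l m d" and F: "F \<in> FS l m n (r+d)" using p cF by auto
    have lenF: "length F = r + d" using F unfolding FS_def by simp
    have lt: "length (take d F) = d" using lenF by simp
    have sumF: "sum_list (map nverts (take d F)) + sum_list (map nverts (drop d F)) = n"
      using F unfolding FS_def by (metis (mono_tags, lifting) append_take_drop_id map_append sum_list_append mem_Collect_eq)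
    have vF: "\<forall>t\<in>set F. is_A_coloring (S_matrix l) (l+m) t" using F unfolding FS_def by simp
    have vt: "\<forall>t\<in>set (take d F). is_A_coloring (S_matrix l) (l+m) t"
      using vF by (meson in_set_takeD)
    have vd: "\<forall>t\<in>set (drop d F). is_A_coloring (S_matrix l) (l+m) t"
      using vF by (meson in_set_dropD)
    show "ts \<in> FS l m (Suc n) (Suc r)"
      unfolding tsp cF FS_def cons_map_def using lenF lt sumF vt vd c valid_node[of l m c "take d F"]
      by auto
  qed
qed

lemma finite_colset: "finite (colset l m d)"
  by (simp add: colset_def)

lemma finite_FS: "finite (FS l m n r)"
proof (induction n arbitrary: r)
  case 0 then show ?case by (simp add: FS_0)
next
  case (Suc n)
  then show ?case
    by (cases r) (auto simp: FS_Suc0 FS_Suc finite_colset)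
qed

lemma card_FS_Suc: "card (FS l m (Suc n) (Suc r)) =
   (\<Sum>d\<le>n. card (colset l m d) * card (FS l m n (r+d)))"
proof -
  have inj: "inj_on (cons_map d) A" for d A
  proof (rule inj_onI)
    fix p q assume "cons_map d p = cons_map d q"
    then have "fst p = fst q" "take d (snd p) = take d (snd q)" "drop d (snd p) = drop d (snd q)"
      by (auto simp: cons_map_def)
    then show "p = q" by (metis append_take_drop_id prod_eqI)
  qed
  have disj: "cons_map d ` (colset l m d \<times> FS l m n (r+d)) \<inter> cons_map e ` (colset l m e \<times> FS l m n (r+e)) = {}"
    if "d \<noteq> e" for d e
  proof -
    { fix p q assume p: "p \<in> colset l m d \<times> FS l m n (r+d)" and q: "q \<in> colset l m e \<times> FS l m n (r+e)"
        and eq: "cons_map d p = cons_map e q"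
      have "length (take d (snd p)) = d" using p unfolding FS_def by auto
      moreover have "length (take e (snd q)) = e" using q unfolding FS_def by auto
      moreover have "take d (snd p) = take e (snd q)" using eq by (simp add: cons_map_def)
      ultimately have False using that by simp }
    then show ?thesis by blast
  qed
  have "card (FS l m (Suc n) (Suc r)) = (\<Sum>d\<le>n. card (cons_map d ` (colset l m d \<times> FS l m n (r+d))))"
    unfolding FS_Suc
    by (rule card_UN_disjoint) (auto simp: finite_colset finite_FS intro!: disj)
  also have "\<dots> = (\<Sum>d\<le>n. card (colset l m d) * card (FS l m n (r+d)))"
    by (simp add: card_image[OF inj] card_cartesian_product)
  finally show ?thesis .
qed

definition W :: "nat \<Rightarrow> nat \<Rightarrow> nat \<Rightarrow> nat \<Rightarrow> real" where
  "W l m n r = real (card (FS l m n r))"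

lemma W_Suc: "W l m (Suc n) (Suc r) = real (l+m) * W l m n r + real l * (\<Sum>d<n. W l m n (r + Suc d))"
proof -
  have "W l m (Suc n) (Suc r) = (\<Sum>d\<le>n. real (card (colset l m d)) * W l m n (r+d))"
    by (simp add: W_def card_FS_Suc)
  also have "\<dots> = real (l+m) * W l m n r + (\<Sum>d<n. real l * W l m n (r + Suc d))"
    by (subst sum.atMost_shift) (simp add: colset_def)
  finally show ?thesis by (simp add: sum_distrib_left)
qed

lemma W_empty: "n < r \<Longrightarrow> W l m n r = 0"
  by (simp add: W_def FS_empty)

lemma W_rec: "W l m (Suc n) (Suc r) = W l m (Suc n) (Suc (Suc r)) + real (l+m) * W l m n r
   + (real l - real (l+m)) * W l m n (Suc r)"
proof -
  define g where "g d = W l m n (r + Suc d)" for d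
  have "(\<Sum>d<Suc n. g d) = g 0 + (\<Sum>d<n. g (Suc d))" by (rule sum.lessThan_Suc_shift)
  moreover have "(\<Sum>d<Suc n. g d) = (\<Sum>d<n. g d) + g n" by simp
  moreover have "g n = 0" unfolding g_def by (rule W_empty) simp
  ultimately have key: "(\<Sum>d<n. g d) = g 0 + (\<Sum>d<n. g (Suc d))" by simp
  have s2: "(\<Sum>d<n. W l m n (Suc r + Suc d)) = (\<Sum>d<n. g (Suc d))" by (simp add: g_def)
  show ?thesis
    using W_Suc[of l m n r] W_Suc[of l m n "Suc r"] key s2
    unfolding g_def by (simp add: algebra_simps)
qed

lemma W_eq_G: "W l m n r = G (real l) (real (l+m)) n r"
proof (induction n arbitrary: r)
  case 0
  then show ?case by (simp add: W_def FS_0 G_def)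
next
  case (Suc n)
  note outer = Suc.IH
  have zero: "W l m (Suc n) 0 = G (real l) (real (l+m)) (Suc n) 0"
    by (simp add: W_def FS_Suc0 G_def Dd_same)
  have "\<forall>r. Suc n < Suc r + k \<longrightarrow> W l m (Suc n) (Suc r) = G (real l) (real (l+m)) (Suc n) (Suc r)" for k
  proof (induction k)
    case 0 then show ?case by (auto simp: W_empty G_def)
  next
    case (Suc k)
    show ?case
    proof (intro allI impI)
      fix r assume h: "Suc n < Suc r + Suc k"
      show "W l m (Suc n) (Suc r) = G (real l) (real (l+m)) (Suc n) (Suc r)"
      proof -
        have "W l m (Suc n) (Suc (Suc r)) = G (real l) (real (l+m)) (Suc n) (Suc (Suc r))"
          using Suc.IH h by simp
        then show ?thesis using W_rec[of l m n r] G_rec[of "real l" "real (l+m)" n r] outer[of r] outer[of "Suc r"]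
          by simp
      qed
    qed
  qed
  note all = this
  show ?case
  proof (cases r)
    case 0 then show ?thesis using zero by simp
  next
    case (Suc r') then show ?thesis using all[of "Suc n"] by simp
  qed
qed

lemma tA_W: "real (tA (S_matrix l) (l+m) n) = W l m n 1"
proof -
  have "FS l m n 1 = (\<lambda>T. [T]) ` {T. nverts T = n \<and> is_A_coloring (S_matrix l) (l+m) T}"
    unfolding FS_def by (auto simp: length_Suc_conv)
  then have "card (FS l m n 1) = card {T. nverts T = n \<and> is_A_coloring (S_matrix l) (l+m) T}"
    by (simp add: card_image inj_on_def)
  then show ?thesis by (simp add: W_def tA_def)
qed


lemma Dd_nar:
  assumes "1 \<le> i" "i \<le> a"
  shows "Dd a (a-1) i = narayana a (Suc a - i)"
proof -
  obtain j where i: "i = Suc j" using assms by (cases i) auto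
  have ja: "j < a" using assms i by simp
  have s1: "(a choose (Suc a - i)) = (a choose j)"
    using ja i by (simp add: binomial_symmetric[of j a])
  have s2: "(a choose (Suc a - i - 1)) = (a choose Suc j)"
    using ja i binomial_symmetric[of "Suc j" a] by simp
  have h2: "real (a - j) * real (a choose j) = real a * real ((a - 1) choose j)"
    using binomial_absorb_comp[of a j] by (metis of_nat_mult)
  have h3: "real (a - Suc j) * real (a choose Suc j) = real a * real ((a - 1) choose Suc j)"
    using binomial_absorb_comp[of a "Suc j"] by (metis of_nat_mult)
  have d2: "real (a - j) = real a - real j" using ja by simp
  have d3: "real (a - Suc j) = real a - real j - 1" using ja by simp
  have apos: "real a > 0" using ja by simp
  have "real a * Dd a (a-1) i = real (a choose Suc j) * (real a * real ((a-1) choose j))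
        - real (a choose j) * (real a * real ((a-1) choose Suc j))"
    using i by (simp add: algebra_simps)
  also have "\<dots> = real (a choose Suc j) * (real (a - j) * real (a choose j))
        - real (a choose j) * (real (a - Suc j) * real (a choose Suc j))"
    by (simp only: h2 h3)
  also have "\<dots> = real (a choose j) * real (a choose Suc j)"
    unfolding d2 d3 by (simp add: algebra_simps)
  finally have "Dd a (a-1) i = real (a choose j) * real (a choose Suc j) / real a"
    using apos by (simp add: field_simps)
  then show ?thesis unfolding narayana_def s1 s2 by simp
qed

lemma G_final:
  assumes "n > 1"
  shows "G x y n 1 = (\<Sum>k=1..n-1. narayana (n-1) k * x ^ (n - k) * y ^ k)"
proof -
  obtain a where n: "n = Suc a" and a: "a \<ge> 1" using assms by (cases n) auto
  have "G x y n 1 = (\<Sum>i\<le>n. Dd a (a-1) i * x^i * y^(n-i))"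
    using assms n by (simp add: G_def)
  also have "\<dots> = (\<Sum>i\<in>{1..a}. Dd a (a-1) i * x^i * y^(n-i))"
  proof (rule sum.mono_neutral_right)
    show "finite {..n}" by simp
    show "{1..a} \<subseteq> {..n}" using n by auto
    show "\<forall>i\<in>{..n} - {1..a}. Dd a (a - 1) i * x ^ i * y ^ (n - i) = 0"
    proof
      fix i assume "i \<in> {..n} - {1..a}"
      then have "i = 0 \<or> i = Suc a" using n by auto
      then show "Dd a (a - 1) i * x ^ i * y ^ (n - i) = 0"
      proof
        assume "i = 0" then show ?thesis by simp
      next
        assume "i = Suc a" then show ?thesis using a by (simp add: binomial_eq_0)
      qed
    qed
  qed
  also have "\<dots> = (\<Sum>i\<in>{1..a}. narayana a (Suc a - i) * x^i * y^(Suc a - i))"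
    using Dd_nar[of _ a] n by (intro sum.cong) auto
  also have "\<dots> = (\<Sum>k\<in>{1..a}. narayana a k * x^(Suc a - k) * y^k)"
    by (subst sum.atLeastAtMost_rev) (rule sum.cong, auto simp: Suc_diff_le)
  finally show ?thesis using n by simp
qed

theorem theorem32:
  fixes l m n :: nat
  assumes "l > 0" and "m > 0" and "n > 1"
  shows "real (tA (S_matrix l) (l + m) n)
           = (\<Sum>k=1..n-1. narayana (n-1) k * real l ^ (n - k) * real (l + m) ^ k)
       \<and> (\<Sum>k=1..n-1. narayana (n-1) k * real l ^ (n - k) * real (l + m) ^ k)
           = (\<Sum>k=1..n-1. (1 / real (n-1)) * real ((n-1) choose k) * real ((n-1) choose (k-1))
                            * real l ^ (n - k) * real (l + m) ^ k)"
proof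
  show "real (tA (S_matrix l) (l + m) n)
           = (\<Sum>k=1..n-1. narayana (n-1) k * real l ^ (n - k) * real (l + m) ^ k)"
    using tA_W[of l m n] W_eq_G[of l m n 1] G_final[OF assms(3), of "real l" "real (l+m)"] by simp
  show "(\<Sum>k=1..n-1. narayana (n-1) k * real l ^ (n - k) * real (l + m) ^ k)
           = (\<Sum>k=1..n-1. (1 / real (n-1)) * real ((n-1) choose k) * real ((n-1) choose (k-1))
                            * real l ^ (n - k) * real (l + m) ^ k)"
    by (simp add: narayana_def)
qed

end
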